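(* Let $(\mathcal A,\mathcal T,(-))$ be a meta-tangible $\mathcal T$-monoid module triple with identity $\mathbb 1\in\mathcal T$, and put $e=\mathbb 1(-)\mathbb 1$, $e'=e+\mathbb 1$, $\mathbf 3=\mathbb 1+\mathbb 1+\mathbb 1$. Then exactly one of the following holds: (i) $e'\in\mathcal T$, and then $e'=\mathbb 1$; (ii) $e'\in\mathcal T^\circ$, and then $e'=e$; (iii) $e'\notin\mathcal T\cup\mathcal T^\circ$, and then $(-)\mathbb 1=\mathbb 1$ and $e'=\mathbf 3$.
   Context: $(\mathcal A,+,\mathbb 0)$ commutative monoid, $\mathcal T\subseteq\mathcal A\setminus\{\mathbb 0\}$. A negation map is $(-):\mathcal A\to\mathcal A$ with $(-)(b_1+b_2)=(-)b_1+(-)b_2$, $(-)((-)b)=b$, $(-)\mathbb 0=\mathbb 0$, $(-)\mathcal T\subseteq\mathcal T$. Write $b(-)c:=b+((-)c)$, $b^\circ:=b(-)b$, $\mathcal A^\circ=\{b^\circ:b\in\mathcal A\}$, $\mathcal T^\circ=\{a^\circ:a\in\mathcal T\}$. A $\mathcal T$-triple $(\mathcal A,\mathcal T,(-))$: such data with an action $\mathcal T\times\mathcal A\to\mathcal A$ satisfying $a(b_1+b_2)=ab_1+ab_2$, $a\mathbb 0=\mathbb 0$, $(-)(ab)=((-)a)b=a((-)b)$, with $\mathcal T\cap\mathcal A^\circ=\emptyset$ and every element of $\mathcal A$ a finite sum of elements of $\mathcal T$. It is a $\mathcal T$-monoid module triple if moreover $\mathcal T$ is a monoid with identity $\mathbb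 1$ whose multiplication is the restriction of the action, $\mathbb 1b=b$ and $(a_1a_2)b=a_1(a_2b)$. The triple is meta-tangible if $a+b\in\mathcal T$ for all $a,b\in\mathcal T$ with $b\neq(-)a$. *)

theory Defs
  imports Main
begin

text \<open>The ambient commutative monoid (A,+,0) is the type 'a. T is a subset,
 neg is the negation map (-), act is the action T x A -> A (only its values
 at a in T matter).\<close>

definition quasi_zeros :: "('a::comm_monoid_add \<Rightarrow> 'a) \<Rightarrow> 'a set" where
  "quasi_zeros neg = {b + neg b | b. True}"

definition tang_circ :: "'a::comm_monoid_add set \<Rightarrow> ('a \<Rightarrow> 'a) \<Rightarrow> 'a set" where
  "tang_circ T neg = {a + neg a | a. a \<in> T}"

definition negation_map :: "'a::comm_monoid_add set \<Rightarrow> ('a \<Rightarrow> 'a) \<Rightarrow> bool" where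
  "negation_map T neg \<longleftrightarrow>
     (\<forall>b1 b2. neg (b1 + b2) = neg b1 + neg b2) \<and>
     (\<forall>b. neg (neg b) = b) \<and> neg 0 = 0 \<and> neg ` T \<subseteq> T"

definition T_triple :: "'a::comm_monoid_add set \<Rightarrow> ('a \<Rightarrow> 'a) \<Rightarrow> ('a \<Rightarrow> 'a \<Rightarrow> 'a) \<Rightarrow> bool" where
  "T_triple T neg act \<longleftrightarrow>
     T \<subseteq> UNIV - {0} \<and> negation_map T neg \<and>
     (\<forall>a\<in>T. \<forall>b1 b2. act a (b1 + b2) = act a b1 + act a b2) \<and>
     (\<forall>a\<in>T. act a 0 = 0) \<and>
     (\<forall>a\<in>T. \<forall>b. neg (act a b) = act (neg a) b \<and> neg (act a b) = act a (neg b)) \<and>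
     T \<inter> quasi_zeros neg = {} \<and>
     (\<forall>b. \<exists>xs. set xs \<subseteq> T \<and> b = sum_list xs)"

definition T_monoid_module_triple ::
  "'a::comm_monoid_add set \<Rightarrow> ('a \<Rightarrow> 'a) \<Rightarrow> ('a \<Rightarrow> 'a \<Rightarrow> 'a) \<Rightarrow> 'a \<Rightarrow> bool" where
  "T_monoid_module_triple T neg act one \<longleftrightarrow>
     T_triple T neg act \<and> one \<in> T \<and>
     (\<forall>a1\<in>T. \<forall>a2\<in>T. act a1 a2 \<in> T) \<and>
     (\<forall>a\<in>T. act a one = a) \<and>
     (\<forall>b. act one b = b) \<and>
     (\<forall>a1\<in>T. \<forall>a2\<in>T. \<forall>b. act (act a1 a2) b = act a1 (act a2 b))"

definition meta_tangible :: "'a::comm_monoid_add set \<Rightarrow> ('a \<Rightarrow> 'a) \<Rightarrow> bool" where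
  "meta_tangible T neg \<longleftrightarrow> (\<forall>a\<in>T. \<forall>b\<in>T. b \<noteq> neg a \<longrightarrow> a + b \<in> T)"

end

theory Submission
  imports Defs
begin

theorem proposition7p2:
  fixes T :: "'a::comm_monoid_add set" and neg :: "'a \<Rightarrow> 'a"
    and act :: "'a \<Rightarrow> 'a \<Rightarrow> 'a" and one :: 'a
  assumes "T_monoid_module_triple T neg act one"
    and "meta_tangible T neg"
  defines "e \<equiv> one + neg one"
  defines "e' \<equiv> e + one"
  defines "three \<equiv> one + one + one"
  shows "let P1 = (e' \<in> T \<and> e' = one);
             P2 = (e' \<in> tang_circ T neg \<and> e' = e);
             P3 = (e' \<notin> T \<union> tang_circ T neg \<and> neg one = one \<and> e' = three)
         in (P1 \<or> P2 \<or> P3) \<and> \<not> (P1 \<and> P2) \<and> \<not> (P1 \<and> P3) \<and> \<not> (P2 \<and> P3)"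
proof -
  have tr: "T_triple T neg act" and oneT: "one \<in> T"
    and act1: "\<forall>a\<in>T. act a one = a"
    using assms(1) unfolding T_monoid_module_triple_def by auto
  have nadd: "\<And>x y. neg (x + y) = neg x + neg y" and ninv: "\<And>x. neg (neg x) = x"
    and nT: "\<And>x. x \<in> T \<Longrightarrow> neg x \<in> T"
    using tr unfolding T_triple_def negation_map_def by auto
  have actadd: "\<And>a x y. a \<in> T \<Longrightarrow> act a (x + y) = act a x + act a y"
    and actneg: "\<And>a x. a \<in> T \<Longrightarrow> neg (act a x) = act a (neg x)"
    using tr unfolding T_triple_def by blast+
  have QZ: "\<And>b. b + neg b \<notin> T"
  proof
    fix b assume "b + neg b \<in> T"
    moreover have "b + neg b \<in> quasi_zeros neg" unfolding quasi_zeros_def by auto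
    ultimately show False using tr unfolding T_triple_def by auto
  qed
  have MT: "\<And>a b. a \<in> T \<Longrightarrow> b \<in> T \<Longrightarrow> b \<noteq> neg a \<Longrightarrow> a + b \<in> T"
    using assms(2) unfolding meta_tangible_def by auto
  have TC: "\<And>x. x \<in> tang_circ T neg \<Longrightarrow> x \<notin> T"
    unfolding tang_circ_def using QZ by auto
  define m where "m = neg one"
  have mT: "m \<in> T" using nT oneT m_def by auto
  have e'eq: "e' = one + one + m" unfolding e'_def e_def m_def by (simp add: ac_simps)
  have A: "e' = one" if h: "e' \<in> T"
  proof -
    have "e' + m = (one + one) + neg (one + one)" unfolding e'eq m_def nadd by (simp add: ac_simps)
    hence "e' + m \<notin> T" using QZ by simp
    hence "m = neg e'" using MT[OF h mT] by auto
    hence "neg m = e'" using ninv by simp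
    thus ?thesis using ninv m_def by simp
  qed
  have main: "(e' \<in> T \<and> e' = one) \<or> (e' \<in> tang_circ T neg \<and> e' = e)
      \<or> (e' \<notin> T \<union> tang_circ T neg \<and> neg one = one \<and> e' = three)"
  proof (cases "e' \<in> T")
    case True thus ?thesis using A by auto
  next
    case nT': False
    show ?thesis
    proof (cases "m = one")
      case False
      have 2: "one + one \<in> T" using MT[OF oneT oneT] False m_def by auto
      have "e' = (one + one) + m" using e'eq by simp
      hence "m = neg (one + one)" using MT[OF 2 mT] nT' by auto
      hence mm: "m = m + m" using nadd m_def by simp
      hence "neg m = neg m + neg m" using nadd by metis
      hence o: "one = one + one" using ninv m_def by simp
      have "e' = e" unfolding e'eq e_def m_def[symmetric] using o by (simp add: ac_simps)
      moreover have "e \<in> tang_circ T neg" unfolding tang_circ_def e_def using oneT by auto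
      ultimately show ?thesis by simp
    next
      case m1: True
      show ?thesis
      proof (cases "e' \<in> tang_circ T neg")
        case False
        thus ?thesis using nT' m1 m_def unfolding e'_def e_def three_def by auto
      next
        case True
        then obtain a where aT: "a \<in> T" and ea: "e' = a + neg a" unfolding tang_circ_def by auto
        have na: "neg a = a"
          using actneg[OF aT, of one] act1 aT m1 m_def by simp
        show ?thesis
        proof (cases "a = one")
          case True thus ?thesis using ea na \<open>e' \<in> tang_circ T neg\<close> m1 m_def
            unfolding e_def by auto
        next
          case False
          have cT: "one + a \<in> T" using MT[OF oneT aT] False m1 m_def by auto
          have "(one + a) + a = one + e'" using ea na by (simp add: ac_simps)
          also have "\<dots> = (one + one) + neg (one + one)"
            using e'eq m1 nadd m_def by (simp add: ac_simps)
          finally have "(one + a) + a \<notin> T" using QZ by simp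
          hence "a = neg (one + a)" using MT[OF cT aT] by auto
          hence c: "one + a = a" using ninv na by metis
          have e3: "e' = one + one + one" using e'eq m1 by simp
          have "e' + one = a + (a + one)" using ea na by (simp add: ac_simps)
          hence e4: "e' + one = e'" using c ea na by (simp add: ac_simps)
          have "act a e' = act a (e' + one)" using e4 by simp
          hence "act a (one + one + one) = act a (one + one + one + one)" using e3 by simp
          hence "a + a + a = a + a + a + a" using actadd[OF aT] act1 aT by simp
          moreover have "a + a + a = a"
          proof -
            have "a + a + a = e' + a" using ea na by simp
            also have "\<dots> = one + (one + (one + a))" using e3 by (simp add: ac_simps)
            also have "\<dots> = a" using c by simp
            finally show ?thesis .
          qed
          moreover have "a + a + a + a = e' + neg e'"
            using ea na nadd by (simp add: ac_simps)
          ultimately have "a = e' + neg e'" by simp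
          thus ?thesis using QZ aT by metis
        qed
      qed
    qed
  qed
  show ?thesis using main TC unfolding Let_def by blast
qed

end
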